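(* For every $n\ge2$ and every $m\in\mathbb N$, $$\lim_{\theta\searrow0}\Theta(m,\theta,n-1)=N_m(\mathbb S^{n-1}).$$
   Context: $\mathbb S^{n-1}$ is the unit sphere in $\mathbb R^n$ with standard measure $\mu_{\mathbb S^{n-1}}$. $\mathcal P_m$ denotes the polynomials on $\mathbb R^n$ of degree at most $m$, and $\mathring{\mathcal P}_m=\{p\in\mathcal P_m:\int_{\mathbb S^{n-1}}p\,d\mu_{\mathbb S^{n-1}}=0\}$. $\mathcal M^c_m(\mathbb S^{n-1})$ is the set of probability measures $\nu$ on $\mathbb S^{n-1}$ supported on a countable set $\{\xi_i\}$ with $\int p\,d\nu=0$ for all $p\in\mathring{\mathcal P}_m$. For $0<\theta<1$, $\Theta(m,\theta,n-1)=\inf\{\sum_i\nu_i^\theta:\ \nu\in\mathcal M^c_m(\mathbb S^{n-1})\text{ supported on }\{\xi_i\},\ \nu_i=\nu(\{\xi_i\})\}$. $N_m(\mathbb S^{n-1})$ is the smallest $N\in\mathbb N$ for which there exist $x_1,\dots,x_N\in\mathbb S^{n-1}$ and $\nu_1,\dots,\nu_N\ge0$ with $\sum_i\nu_i=1$ and $\sum_i\nu_ip(x_i)=0$ for all $p\in\mathring{\mathcal P}_m$. *)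

theory Defs
  imports "HOL-Analysis.Analysis" "HOL-Probability.Probability"
begin

definition multi_idx :: "nat \<Rightarrow> ('n::finite \<Rightarrow> nat) set" where
  "multi_idx m = {\<alpha>. (\<Sum>i\<in>UNIV. \<alpha> i) \<le> m}"

definition polys :: "nat \<Rightarrow> ((real^'n::finite) \<Rightarrow> real) set" where
  "polys m = {p. \<exists>c :: ('n \<Rightarrow> nat) \<Rightarrow> real.
      p = (\<lambda>x. \<Sum>\<alpha>\<in>multi_idx m. c \<alpha> * (\<Prod>i\<in>UNIV. (x $ i) ^ (\<alpha> i)))}"

text \<open>Standard (surface) measure on the unit sphere, via the cone construction:
  sigma(A) = n * lebesgue{ t x : x in A, 0 < t <= 1 }, i.e. n times the push-forward
  of Lebesgue measure on the punctured unit ball under radial projection.\<close>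
definition sphere_measure :: "(real^'n::finite) measure" where
  "sphere_measure = scale_measure (of_nat CARD('n))
     (distr (restrict_space lborel (ball 0 1 - {0})) (restrict_space borel (sphere 0 1))
        (\<lambda>x. x /\<^sub>R norm x))"

definition polys0 :: "nat \<Rightarrow> ((real^'n::finite) \<Rightarrow> real) set" where
  "polys0 m = {p \<in> polys m. integral\<^sup>L sphere_measure p = 0}"

text \<open>M^c_m(S^{n-1}): probability measures on the sphere with countable support
  (i.e. discrete probability measures = pmfs) integrating every p in polys0 m to 0.\<close>
definition Mc :: "nat \<Rightarrow> (real^'n::finite) pmf set" where
  "Mc m = {\<nu>. set_pmf \<nu> \<subseteq> sphere 0 1 \<and>
              (\<forall>p\<in>polys0 m. measure_pmf.expectation \<nu> p = 0)}"

definition Theta :: "'n::finite itself \<Rightarrow> nat \<Rightarrow> real \<Rightarrow> ennreal" where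
  "Theta _ m \<theta> = (INF \<nu>\<in>(Mc m :: (real^'n) pmf set).
      (\<Sum>\<^sub>\<infinity>x\<in>set_pmf \<nu>. ennreal (pmf \<nu> x powr \<theta>)))"

definition Nm :: "'n::finite itself \<Rightarrow> nat \<Rightarrow> nat" where
  "Nm _ m = (LEAST N. \<exists>(x :: nat \<Rightarrow> real^'n) (w :: nat \<Rightarrow> real).
      (\<forall>i<N. x i \<in> sphere 0 1 \<and> w i \<ge> 0) \<and> (\<Sum>i<N. w i) = 1 \<and>
      (\<forall>p\<in>polys0 m. (\<Sum>i<N. w i * p (x i)) = 0))"

end

theory Submission
  imports Defs "HOL-Library.Function_Algebras"
begin


definition mnm :: "('n::finite \<Rightarrow> nat) \<Rightarrow> real^'n \<Rightarrow> real" where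
  "mnm \<alpha> x = (\<Prod>i\<in>UNIV. (x $ i) ^ (\<alpha> i))"

lemma finite_multi_idx: "finite (multi_idx m :: ('n::finite \<Rightarrow> nat) set)"
proof -
  have "multi_idx m \<subseteq> PiE (UNIV::'n set) (\<lambda>_. {..m})"
  proof
    fix \<alpha> :: "'n \<Rightarrow> nat" assume "\<alpha> \<in> multi_idx m"
    hence s: "(\<Sum>i\<in>UNIV. \<alpha> i) \<le> m" by (simp add: multi_idx_def)
    have "\<alpha> i \<le> m" for i
      using member_le_sum[of i UNIV \<alpha>] s by simp
    thus "\<alpha> \<in> PiE UNIV (\<lambda>_. {..m})" by auto
  qed
  moreover have "finite (PiE (UNIV::'n set) (\<lambda>_. {..m}))" by (rule finite_PiE) auto
  ultimately show ?thesis by (rule finite_subset)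
qed

lemma zero_in_multi_idx: "(\<lambda>_. 0) \<in> multi_idx m"
  by (simp add: multi_idx_def)

lemma mnm_zero[simp]: "mnm (\<lambda>_. 0) x = 1"
  by (simp add: mnm_def)

lemma polys_eq: "p \<in> polys m \<longleftrightarrow> (\<exists>c. p = (\<lambda>x. \<Sum>\<alpha>\<in>multi_idx m. c \<alpha> * mnm \<alpha> x))"
  by (simp add: polys_def mnm_def)

lemma tendsto_mnm:
  assumes "(f \<longlongrightarrow> (x::real^'n::finite)) F"
  shows "((\<lambda>k. mnm \<alpha> (f k)) \<longlongrightarrow> mnm \<alpha> x) F"
  unfolding mnm_def using assms
  by (intro tendsto_prod tendsto_power tendsto_vec_nth) auto

lemma tendsto_poly:
  assumes "p \<in> polys m" "(f \<longlongrightarrow> (x::real^'n::finite)) F"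
  shows "((\<lambda>k. p (f k)) \<longlongrightarrow> p x) F"
proof -
  obtain c where c: "p = (\<lambda>x. \<Sum>\<alpha>\<in>multi_idx m. c \<alpha> * mnm \<alpha> x)" using assms polys_eq by blast
  show ?thesis unfolding c using assms(2)
    by (intro tendsto_sum tendsto_mult tendsto_const tendsto_mnm) auto
qed

lemma continuous_on_mnm: "continuous_on A (mnm \<alpha>)"
  unfolding mnm_def by (intro continuous_intros)

lemma continuous_on_poly: "p \<in> polys m \<Longrightarrow> continuous_on A p"
  unfolding polys_eq by (auto intro!: continuous_intros continuous_on_mnm)

lemma mnm_bound: "x \<in> sphere (0::real^'n::finite) 1 \<Longrightarrow> \<bar>mnm \<alpha> x\<bar> \<le> 1"
proof -
  assume x: "x \<in> sphere 0 1"
  have "\<bar>x $ i\<bar> \<le> 1" for i using component_le_norm_cart[of x i] x by simp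
  hence "\<bar>x $ i ^ \<alpha> i\<bar> \<le> 1" for i by (simp add: power_abs power_le_one)
  thus ?thesis unfolding mnm_def abs_prod by (intro prod_le_1) auto
qed

lemma poly_bounded:
  assumes "p \<in> polys m"
  shows "\<exists>B. \<forall>x\<in>sphere (0::real^'n::finite) 1. \<bar>p x\<bar> \<le> B"
proof -
  have "compact (p ` sphere 0 1)"
    by (intro compact_continuous_image continuous_on_poly[OF assms]) auto
  then obtain B where "\<forall>y\<in>p ` sphere 0 1. norm y \<le> B"
    using compact_imp_bounded bounded_iff by metis
  thus ?thesis by auto
qed

lemma bw_fin:
  fixes f :: "nat \<Rightarrow> nat \<Rightarrow> 'a::metric_space"
  assumes "compact K" "\<And>k i. i < D \<Longrightarrow> f k i \<in> K"
  shows "\<exists>l r. strict_mono r \<and> (\<forall>i<D. l i \<in> K \<and> ((\<lambda>k. f (r k) i) \<longlonglongrightarrow> l i))"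
  using assms(2)
proof (induction D)
  case 0
  show ?case by (rule exI[of _ "\<lambda>_. undefined"], rule exI[of _ id]) (auto simp: strict_mono_def)
next
  case (Suc D)
  then obtain l r where r: "strict_mono r" and l: "\<forall>i<D. l i \<in> K \<and> ((\<lambda>k. f (r k) i) \<longlonglongrightarrow> l i)"
    by auto
  have "\<forall>k. f (r k) D \<in> K" using Suc.prems by auto
  then obtain a r' where a: "a \<in> K" and r': "strict_mono r'" and lim: "((\<lambda>k. f (r k) D) \<circ> r') \<longlonglongrightarrow> a"
    using assms(1) unfolding compact_eq_seq_compact_metric seq_compact_def by meson
  show ?case
  proof (intro exI conjI allI impI)
    show "strict_mono (r \<circ> r')" using r r' by (simp add: strict_mono_o)
    fix i assume i: "i < Suc D"
    show "(l(D := a)) i \<in> K" using l a i by (cases "i = D") auto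
    show "(\<lambda>k. f ((r \<circ> r') k) i) \<longlonglongrightarrow> (l(D := a)) i"
    proof (cases "i = D")
      case True thus ?thesis using lim by (simp add: o_def)
    next
      case False
      hence "i < D" using i by simp
      hence "(\<lambda>k. f (r k) i) \<longlonglongrightarrow> l i" using l by auto
      from LIMSEQ_subseq_LIMSEQ[OF this r'] False show ?thesis by (simp add: o_def)
    qed
  qed
qed


definition cub :: "'n::finite itself \<Rightarrow> nat \<Rightarrow> nat \<Rightarrow> bool" where
  "cub _ m N = (\<exists>(x :: nat \<Rightarrow> real^'n) (w :: nat \<Rightarrow> real).
      (\<forall>i<N. x i \<in> sphere 0 1 \<and> w i \<ge> 0) \<and> (\<Sum>i<N. w i) = 1 \<and>
      (\<forall>p\<in>polys0 m. (\<Sum>i<N. w i * p (x i)) = 0))"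

lemma Nm_cub: "Nm TYPE('n::finite) m = (LEAST N. cub TYPE('n) m N)"
  unfolding Nm_def cub_def by simp

lemma pmf_tail_bound:
  fixes \<nu> :: "(real^'n::finite) pmf"
  assumes \<nu>: "\<nu> \<in> Mc m" and p: "p \<in> polys0 m" and B: "\<forall>x\<in>sphere 0 1. \<bar>p x\<bar> \<le> B"
    and A: "finite A"
  shows "\<bar>\<Sum>a\<in>A. pmf \<nu> a * p a\<bar> \<le> B * (1 - measure_pmf.prob \<nu> A)"
proof -
  have supp: "set_pmf \<nu> \<subseteq> sphere 0 1" and E: "measure_pmf.expectation \<nu> p = 0"
    using \<nu> p by (auto simp: Mc_def)
  have int: "integrable (measure_pmf \<nu>) (\<lambda>x. indicator S x * p x)" for S
    by (rule measure_pmf.integrable_const_bound[where B=B])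
       (use supp B in \<open>auto simp: AE_measure_pmf_iff indicator_def\<close>)
  have int2: "integrable (measure_pmf \<nu>) (\<lambda>x. indicator S x * B)" for S
    by (rule measure_pmf.integrable_const_bound[where B="\<bar>B\<bar>"])
       (auto simp: AE_measure_pmf_iff indicator_def)
  have split: "p x = indicator A x * p x + indicator (- A) x * p x" for x
    by (auto simp: indicator_def)
  have "measure_pmf.expectation \<nu> p
      = measure_pmf.expectation \<nu> (\<lambda>x. indicator A x * p x) + measure_pmf.expectation \<nu> (\<lambda>x. indicator (- A) x * p x)"
  proof -
    have "measure_pmf.expectation \<nu> p = measure_pmf.expectation \<nu> (\<lambda>x. indicator A x * p x + indicator (- A) x * p x)"
      using split by presburger
    also have "\<dots> = measure_pmf.expectation \<nu> (\<lambda>x. indicator A x * p x) + measure_pmf.expectation \<nu> (\<lambda>x. indicator (- A) x * p x)"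
      by (rule Bochner_Integration.integral_add[OF int int])
    finally show ?thesis .
  qed
  moreover have "measure_pmf.expectation \<nu> (\<lambda>x. indicator A x * p x) = (\<Sum>a\<in>A. pmf \<nu> a * p a)"
    by (subst integral_measure_pmf_real[OF A]) (auto simp: indicator_def intro!: sum.cong split: if_splits)
  moreover have "\<bar>measure_pmf.expectation \<nu> (\<lambda>x. indicator (- A) x * p x)\<bar>
       \<le> measure_pmf.expectation \<nu> (\<lambda>x. indicator (- A) x * B)"
  proof -
    have "\<bar>measure_pmf.expectation \<nu> (\<lambda>x. indicator (- A) x * p x)\<bar>
       \<le> measure_pmf.expectation \<nu> (\<lambda>x. \<bar>indicator (- A) x * p x\<bar>)"
      by (rule integral_abs_bound)
    also have "\<dots> \<le> measure_pmf.expectation \<nu> (\<lambda>x. indicator (- A) x * B)"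
      by (rule integral_mono_AE[OF integrable_abs[OF int] int2])
         (use supp B in \<open>auto simp: AE_measure_pmf_iff indicator_def\<close>)
    finally show ?thesis .
  qed
  moreover have "measure_pmf.expectation \<nu> (\<lambda>x. indicator (- A) x * B) = B * (1 - measure_pmf.prob \<nu> A)"
  proof -
    have "measure_pmf.expectation \<nu> (\<lambda>x. indicator (- A) x * B) = measure_pmf.prob \<nu> (- A) * B"
      by simp
    also have "measure_pmf.prob \<nu> (- A) = 1 - measure_pmf.prob \<nu> A"
      using measure_pmf.prob_compl[of A \<nu>] by (simp add: Compl_eq_Diff_UNIV)
    finally show ?thesis by simp
  qed
  ultimately show ?thesis using E by linarith
qed

lemma delta_lemma:
  assumes minN: "\<forall>k<N. \<not> cub TYPE('n::finite) m k" and N: "N \<ge> 1"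
  shows "\<exists>\<delta>>0. \<forall>\<nu>\<in>(Mc m :: (real^'n) pmf set). \<forall>A. finite A \<and> card A < N \<longrightarrow>
            measure_pmf.prob \<nu> A \<le> 1 - \<delta>"
proof (rule ccontr)
  assume "\<not> ?thesis"
  hence "\<forall>k::nat. \<exists>\<nu> A. \<nu> \<in> (Mc m :: (real^'n) pmf set) \<and> finite A \<and> card A < N \<and>
            measure_pmf.prob \<nu> A > 1 - 1 / real (Suc k)"
    by (metis not_le of_nat_0_less_iff zero_less_Suc zero_less_divide_1_iff)
  then obtain nu Af where nuA: "\<And>k. nu k \<in> (Mc m :: (real^'n) pmf set) \<and> finite (Af k) \<and> card (Af k) < N \<and>
            measure_pmf.prob (nu k) (Af k) > 1 - 1 / real (Suc k)"
    by metis
  have "\<forall>k. \<exists>e::nat \<Rightarrow> real^'n. bij_betw e {..<card (Af k)} (Af k)"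
    using nuA by (metis bij_betw_from_nat_into_finite)
  then obtain e where e: "\<And>k. bij_betw (e k) {..<card (Af k)} (Af k)" by metis
  define D where "D = N - 1"
  obtain s0 :: "real^'n" where s0: "s0 \<in> sphere 0 1"
    using sphere_eq_empty[of "0::real^'n" 1] by fastforce
  define x where "x k i = (if i < card (Af k) \<and> e k i \<in> sphere 0 1 then e k i else s0)" for k i
  define w where "w k i = (if i < card (Af k) then pmf (nu k) (e k i) else 0)" for k i
  have cardD: "card (Af k) \<le> D" for k using nuA[of k] D_def by auto
  have supp: "set_pmf (nu k) \<subseteq> sphere 0 1" for k using nuA[of k] by (auto simp: Mc_def)
  have sumw: "(\<Sum>i<D. w k i * f (x k i)) = (\<Sum>a\<in>Af k. pmf (nu k) a * f a)" for k f
  proof -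
    have "(\<Sum>i<D. w k i * f (x k i)) = (\<Sum>i<card (Af k). w k i * f (x k i))"
      by (rule sum.mono_neutral_right) (use cardD in \<open>auto simp: w_def\<close>)
    also have "\<dots> = (\<Sum>i<card (Af k). pmf (nu k) (e k i) * f (e k i))"
    proof (rule sum.cong)
      fix i assume "i \<in> {..<card (Af k)}"
      show "w k i * f (x k i) = pmf (nu k) (e k i) * f (e k i)"
      proof (cases "e k i \<in> sphere 0 1")
        case False
        hence "pmf (nu k) (e k i) = 0" using supp[of k] by (auto simp: set_pmf_iff)
        thus ?thesis using \<open>i \<in> _\<close> by (simp add: w_def)
      qed (use \<open>i \<in> _\<close> in \<open>auto simp: w_def x_def\<close>)
    qed simp
    also have "\<dots> = (\<Sum>a\<in>Af k. pmf (nu k) a * f a)"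
      by (rule sum.reindex_bij_betw[OF e])
    finally show ?thesis .
  qed
  have sumw1: "(\<Sum>i<D. w k i) = measure_pmf.prob (nu k) (Af k)" for k
    using sumw[of k "\<lambda>_. 1"] nuA[of k] by (simp add: measure_measure_pmf_finite)
  have inK: "(x k i, w k i) \<in> sphere 0 1 \<times> {0..1}" if "i < D" for k i
  proof -
    have "e k i \<in> Af k" if "i < card (Af k)" using e[of k] that by (auto simp: bij_betw_def)
    thus ?thesis using s0 by (auto simp: x_def w_def pmf_le_1)
  qed
  have cK: "compact (sphere (0::real^'n) 1 \<times> {0::real..1})"
    by (intro compact_Times) auto
  obtain l r where r: "strict_mono r" and
    l: "\<forall>i<D. l i \<in> sphere 0 1 \<times> {0..1} \<and> ((\<lambda>k. (x (r k) i, w (r k) i)) \<longlonglongrightarrow> l i)"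
    using bw_fin[OF cK, of D "\<lambda>k i. (x k i, w k i)"] inK by blast
  define xs where "xs i = fst (l i)" for i
  define ws where "ws i = snd (l i)" for i
  have limx: "(\<lambda>k. x (r k) i) \<longlonglongrightarrow> xs i" and limw: "(\<lambda>k. w (r k) i) \<longlonglongrightarrow> ws i" if "i < D" for i
    using l that tendsto_fst tendsto_snd unfolding xs_def ws_def by fastforce+
  have inv0: "(\<lambda>k. 1 / real (Suc (r k))) \<longlonglongrightarrow> 0"
  proof -
    have "(\<lambda>k. 1 / real (Suc k)) \<longlonglongrightarrow> 0"
      using LIMSEQ_inverse_real_of_nat by (simp add: inverse_eq_divide)
    from LIMSEQ_subseq_LIMSEQ[OF this r] show ?thesis by (simp add: o_def)
  qed
  have "cub TYPE('n) m D"
    unfolding cub_def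
  proof (intro exI conjI allI impI ballI)
    fix i assume "i < D"
    thus "xs i \<in> sphere 0 1" "ws i \<ge> 0" using l unfolding xs_def ws_def by (auto simp: mem_Times_iff)
  next
    have t1: "(\<lambda>k. \<Sum>i<D. w (r k) i) \<longlonglongrightarrow> (\<Sum>i<D. ws i)"
      by (intro tendsto_sum limw) auto
    have t2: "(\<lambda>k. \<Sum>i<D. w (r k) i) \<longlonglongrightarrow> 1"
    proof (rule tendsto_sandwich[where f="\<lambda>k. 1 - 1 / real (Suc (r k))" and h="\<lambda>k. 1"])
      show "\<forall>\<^sub>F k in sequentially. 1 - 1 / real (Suc (r k)) \<le> (\<Sum>i<D. w (r k) i)"
        using nuA sumw1 by (auto intro!: always_eventually less_imp_le)
      show "\<forall>\<^sub>F k in sequentially. (\<Sum>i<D. w (r k) i) \<le> 1"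
        using sumw1 by (auto intro!: always_eventually)
      show "(\<lambda>k. 1 - 1 / real (Suc (r k))) \<longlonglongrightarrow> 1"
        using tendsto_diff[OF tendsto_const[of 1] inv0] by simp
    qed simp
    show "(\<Sum>i<D. ws i) = 1" using LIMSEQ_unique[OF t1 t2] .
  next
    fix p :: "real^'n \<Rightarrow> real" assume p: "p \<in> polys0 m"
    hence pp: "p \<in> polys m" by (simp add: polys0_def)
    obtain B where B: "\<forall>x\<in>sphere 0 1. \<bar>p x\<bar> \<le> B" using poly_bounded[OF pp] by blast
    have t1: "(\<lambda>k. \<Sum>i<D. w (r k) i * p (x (r k) i)) \<longlonglongrightarrow> (\<Sum>i<D. ws i * p (xs i))"
      by (intro tendsto_sum tendsto_mult limw tendsto_poly[OF pp] limx) auto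
    have B0: "B \<ge> 0" using B s0 by force
    have bnd: "\<bar>\<Sum>i<D. w (r k) i * p (x (r k) i)\<bar> \<le> B * (1 / real (Suc (r k)))" for k
    proof -
      have "\<bar>\<Sum>i<D. w (r k) i * p (x (r k) i)\<bar> \<le> B * (1 - measure_pmf.prob (nu (r k)) (Af (r k)))"
        unfolding sumw using pmf_tail_bound[OF _ p B] nuA by blast
      also have "\<dots> \<le> B * (1 / real (Suc (r k)))"
        using nuA[of "r k"] B0 by (intro mult_left_mono) auto
      finally show ?thesis .
    qed
    have t2: "(\<lambda>k. \<Sum>i<D. w (r k) i * p (x (r k) i)) \<longlonglongrightarrow> 0"
    proof (rule tendsto_sandwich[where f="\<lambda>k. - (B * (1 / real (Suc (r k))))" and h="\<lambda>k. B * (1 / real (Suc (r k)))"])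
      show "\<forall>\<^sub>F k in sequentially. - (B * (1 / real (Suc (r k)))) \<le> (\<Sum>i<D. w (r k) i * p (x (r k) i))"
        using bnd by (intro always_eventually allI) (smt (verit))
      show "\<forall>\<^sub>F k in sequentially. (\<Sum>i<D. w (r k) i * p (x (r k) i)) \<le> B * (1 / real (Suc (r k)))"
        using bnd by (auto intro!: always_eventually simp: abs_le_iff)
      show "(\<lambda>k. - (B * (1 / real (Suc (r k))))) \<longlonglongrightarrow> 0"
        using tendsto_minus[OF tendsto_mult[OF tendsto_const[of B] inv0]] by simp
      show "(\<lambda>k. B * (1 / real (Suc (r k)))) \<longlonglongrightarrow> 0"
        using tendsto_mult[OF tendsto_const[of B] inv0] by simp
    qed
    show "(\<Sum>i<D. ws i * p (xs i)) = 0" using LIMSEQ_unique[OF t1 t2] .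
  qed
  moreover have "D < N" using N D_def by simp
  ultimately show False using minN by blast
qed


lemma infsum_ennreal_ge_finite:
  fixes f :: "'a \<Rightarrow> ennreal"
  assumes "finite F" "F \<subseteq> A"
  shows "sum f F \<le> infsum f A"
  by (subst nonneg_infsum_complete) (use assms in \<open>auto intro!: SUP_upper\<close>)

lemma finite_big_subset:
  fixes \<nu> :: "'a pmf"
  assumes "\<epsilon> > 0"
  shows "\<exists>F. finite F \<and> F \<subseteq> set_pmf \<nu> \<and> measure_pmf.prob \<nu> F > 1 - \<epsilon>"
proof -
  define g where "g = from_nat_into (set_pmf \<nu>)"
  have ne: "set_pmf \<nu> \<noteq> {}" by (rule set_pmf_not_empty)
  have cnt: "countable (set_pmf \<nu>)" by simp
  define A where "A k = g ` {..<k}" for k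
  have inc: "incseq A" unfolding A_def incseq_def by auto
  have un: "(\<Union>k. A k) = set_pmf \<nu>"
  proof
    show "(\<Union>k. A k) \<subseteq> set_pmf \<nu>" using from_nat_into[OF ne] by (auto simp: A_def g_def)
    show "set_pmf \<nu> \<subseteq> (\<Union>k. A k)"
    proof
      fix y assume "y \<in> set_pmf \<nu>"
      hence "g (to_nat_on (set_pmf \<nu>) y) = y" using from_nat_into_to_nat_on[OF cnt] by (simp add: g_def)
      thus "y \<in> (\<Union>k. A k)" unfolding A_def by (intro UN_I[of "Suc (to_nat_on (set_pmf \<nu>) y)"]) (auto intro!: image_eqI[where x="to_nat_on (set_pmf \<nu>) y"])
    qed
  qed
  have "(\<lambda>k. measure_pmf.prob \<nu> (A k)) \<longlonglongrightarrow> measure_pmf.prob \<nu> (set_pmf \<nu>)"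
    using measure_pmf.finite_Lim_measure_incseq[OF _ inc] un by simp
  hence "(\<lambda>k. measure_pmf.prob \<nu> (A k)) \<longlonglongrightarrow> 1"
    by (simp add: measure_def emeasure_pmf)
  hence "\<forall>\<^sub>F k in sequentially. measure_pmf.prob \<nu> (A k) > 1 - \<epsilon>"
    using assms by (intro order_tendstoD) auto
  then obtain k where "measure_pmf.prob \<nu> (A k) > 1 - \<epsilon>" by (meson eventually_sequentially order.refl)
  moreover have "A k \<subseteq> set_pmf \<nu>" "finite (A k)" using un by (auto simp: A_def)
  ultimately show ?thesis by blast
qed

lemma lower_real:
  fixes \<nu> :: "'a pmf" and N :: nat
  assumes dl: "\<forall>A. finite A \<and> card A < N \<longrightarrow> measure_pmf.prob \<nu> A \<le> 1 - d"
    and d: "0 < d" "d \<le> 1/2" and N: "N \<ge> 1"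
    and t: "t = (d / (2 * N))^2" and th: "0 < \<theta>" "\<theta> \<le> 1/2"
    and F: "finite F" "F \<subseteq> set_pmf \<nu>" "measure_pmf.prob \<nu> F > 1 - d/2"
  shows "real N * t powr \<theta> \<le> (\<Sum>y\<in>F. pmf \<nu> y powr \<theta>)"
proof -
  have t0: "0 < t" using t d N by simp
  have sqt: "sqrt t = d / (2 * N)" using t d N by simp
  have t1: "t < 1"
  proof -
    have "d / (2 * N) \<le> 1/2" using d N by (simp add: field_simps)
    moreover have "0 \<le> d / (2 * N)" using d by simp
    ultimately have "(d / (2 * N))^2 \<le> (1/2)^2" by (intro power_mono) auto
    hence "t \<le> 1/4" unfolding t by (simp add: power2_eq_square)
    thus ?thesis by simp
  qed
  have tpow: "t powr \<theta> \<le> 1" using t0 t1 th powr_mono2[of \<theta> t 1] by simp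
  define G where "G = {y\<in>F. pmf \<nu> y \<ge> t}"
  have G: "finite G" "G \<subseteq> F" using F by (auto simp: G_def)
  have nn: "0 \<le> pmf \<nu> y powr \<theta>" for y by simp
  show ?thesis
  proof (cases "card G \<ge> N")
    case True
    have "real N * t powr \<theta> \<le> real (card G) * t powr \<theta>"
      using True by (intro mult_right_mono) auto
    also have "\<dots> = (\<Sum>y\<in>G. t powr \<theta>)" by simp
    also have "\<dots> \<le> (\<Sum>y\<in>G. pmf \<nu> y powr \<theta>)"
      using th t0 by (intro sum_mono powr_mono2) (auto simp: G_def)
    also have "\<dots> \<le> (\<Sum>y\<in>F. pmf \<nu> y powr \<theta>)"
      by (intro sum_mono2 G F nn)
    finally show ?thesis .
  next
    case False
    hence "measure_pmf.prob \<nu> G \<le> 1 - d" using dl G by auto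
    moreover have "measure_pmf.prob \<nu> F = measure_pmf.prob \<nu> G + measure_pmf.prob \<nu> (F - G)"
      using G F by (simp add: measure_measure_pmf_finite sum.subset_diff[of G F])
    ultimately have big: "measure_pmf.prob \<nu> (F - G) \<ge> d / 2" using F by linarith
    have each: "pmf \<nu> y * (1 / sqrt t) \<le> pmf \<nu> y powr \<theta>" if y: "y \<in> F - G" for y
    proof -
      have py: "0 < pmf \<nu> y" "pmf \<nu> y < t" using y F by (auto simp: G_def pmf_positive)
      have "1 / sqrt t = t powr (-1/2)"
        using t0 by (simp add: powr_minus_divide powr_half_sqrt[symmetric])
      also have "\<dots> \<le> t powr (\<theta> - 1)" using t0 t1 th by (intro powr_mono') auto
      also have "\<dots> \<le> pmf \<nu> y powr (\<theta> - 1)" using py th by (intro powr_mono2') auto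
      finally have "pmf \<nu> y * (1 / sqrt t) \<le> pmf \<nu> y * pmf \<nu> y powr (\<theta> - 1)"
        using py by (intro mult_left_mono) auto
      also have "\<dots> = pmf \<nu> y powr \<theta>" using py by (simp add: powr_add[symmetric] powr_diff)
      finally show ?thesis .
    qed
    have "real N * t powr \<theta> \<le> real N" using tpow by (simp add: mult_left_le)
    also have "real N = (d / 2) * (1 / sqrt t)" using sqt d N t0 by (simp add: field_simps)
    also have "\<dots> \<le> measure_pmf.prob \<nu> (F - G) * (1 / sqrt t)"
      using big t0 by (intro mult_right_mono) auto
    also have "\<dots> = (\<Sum>y\<in>F - G. pmf \<nu> y * (1 / sqrt t))"
      using G F by (simp add: measure_measure_pmf_finite sum_divide_distrib)
    also have "\<dots> \<le> (\<Sum>y\<in>F - G. pmf \<nu> y powr \<theta>)" by (intro sum_mono each)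
    also have "\<dots> \<le> (\<Sum>y\<in>F. pmf \<nu> y powr \<theta>)" using F by (intro sum_mono2 nn) auto
    finally show ?thesis .
  qed
qed

lemma pmf_of_list_cub:
  fixes x :: "nat \<Rightarrow> 'a" and w :: "nat \<Rightarrow> real"
  assumes w: "\<forall>i<N. w i \<ge> 0" "(\<Sum>i<N. w i) = 1"
  defines "\<nu> \<equiv> pmf_of_list (map (\<lambda>i. (x i, w i)) [0..<N])"
  shows "set_pmf \<nu> \<subseteq> x ` {..<N}"
    and "\<And>f. measure_pmf.expectation \<nu> f = (\<Sum>i<N. w i * f (x i))"
proof -
  let ?xs = "map (\<lambda>i. (x i, w i)) [0..<N]"
  have wf: "pmf_of_list_wf ?xs"
    by (rule pmf_of_list_wfI) (use w in \<open>auto simp: sum_list_sum_nth atLeast0LessThan\<close>)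
  show "set_pmf \<nu> \<subseteq> x ` {..<N}"
    using set_pmf_of_list[OF wf] unfolding \<nu>_def by auto
  have pmf: "pmf \<nu> a = (\<Sum>i\<in>{i\<in>{..<N}. x i = a}. w i)" for a
  proof -
    have "pmf \<nu> a = sum_list (map (\<lambda>i. if x i = a then w i else 0) [0..<N])"
      unfolding \<nu>_def pmf_pmf_of_list[OF wf] by (simp add: filter_map o_def sum_list_map_filter')
    also have "\<dots> = (\<Sum>i<N. if x i = a then w i else 0)"
      by (simp add: sum_list_sum_nth atLeast0LessThan cong: if_cong)
    also have "\<dots> = (\<Sum>i\<in>{i\<in>{..<N}. x i = a}. w i)"
      by (subst sum.inter_filter[symmetric]) (auto intro!: sum.cong)
    finally show ?thesis .
  qed
  fix f
  have "measure_pmf.expectation \<nu> f = (\<Sum>a\<in>x ` {..<N}. f a * pmf \<nu> a)"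
    by (rule integral_measure_pmf_real) (use \<open>set_pmf \<nu> \<subseteq> _\<close> in auto)
  also have "\<dots> = (\<Sum>a\<in>x ` {..<N}. (\<Sum>i\<in>{i\<in>{..<N}. x i = a}. w i * f (x i)))"
    unfolding pmf sum_distrib_left by (intro sum.cong refl) (auto simp: mult.commute)
  also have "\<dots> = (\<Sum>i<N. w i * f (x i))"
    by (rule sum.image_gen[symmetric]) simp
  finally show "measure_pmf.expectation \<nu> f = (\<Sum>i<N. w i * f (x i))" .
qed

lemma main_cond:
  assumes ex: "\<exists>N. cub TYPE('n::finite) m N"
  shows "((\<lambda>\<theta>. Theta TYPE('n) m \<theta>) \<longlongrightarrow> of_nat (Nm TYPE('n) m)) (at_right 0)"
proof -
  define N where "N = Nm TYPE('n) m"
  have cN: "cub TYPE('n) m N" unfolding N_def Nm_cub using ex by (rule LeastI_ex)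
  have minN: "\<forall>k<N. \<not> cub TYPE('n) m k" unfolding N_def Nm_cub using not_less_Least by blast
  have N1: "N \<ge> 1"
  proof (rule ccontr)
    assume "\<not> N \<ge> 1" hence "N = 0" by simp
    thus False using cN by (simp add: cub_def)
  qed
  obtain x :: "nat \<Rightarrow> real^'n" and w where xw: "\<forall>i<N. x i \<in> sphere 0 1 \<and> w i \<ge> 0" "(\<Sum>i<N. w i) = 1"
    "\<forall>p\<in>polys0 m. (\<Sum>i<N. w i * p (x i)) = 0"
    using cN unfolding cub_def by blast
  define \<nu>0 where "\<nu>0 = pmf_of_list (map (\<lambda>i. (x i, w i)) [0..<N])"
  have s0: "set_pmf \<nu>0 \<subseteq> x ` {..<N}" and e0: "\<And>f. measure_pmf.expectation \<nu>0 f = (\<Sum>i<N. w i * f (x i))"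
    using pmf_of_list_cub[of N w x] xw unfolding \<nu>0_def by auto
  have nu0: "\<nu>0 \<in> Mc m" unfolding Mc_def using s0 xw e0 by auto
  have upper: "Theta TYPE('n) m \<theta> \<le> of_nat N" if th: "\<theta> > 0" for \<theta>
  proof -
    have fin: "finite (set_pmf \<nu>0)" using s0 finite_subset by blast
    have "Theta TYPE('n) m \<theta> \<le> (\<Sum>\<^sub>\<infinity>y\<in>set_pmf \<nu>0. ennreal (pmf \<nu>0 y powr \<theta>))"
      unfolding Theta_def by (rule INF_lower[OF nu0])
    also have "\<dots> = (\<Sum>y\<in>set_pmf \<nu>0. ennreal (pmf \<nu>0 y powr \<theta>))" using fin by simp
    also have "\<dots> \<le> (\<Sum>y\<in>set_pmf \<nu>0. 1)"
    proof (intro sum_mono)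
      fix y
      have "pmf \<nu>0 y powr \<theta> \<le> 1 powr \<theta>" using th by (intro powr_mono2) (auto simp: pmf_le_1)
      thus "ennreal (pmf \<nu>0 y powr \<theta>) \<le> 1" by simp
    qed
    also have "\<dots> = of_nat (card (set_pmf \<nu>0))" by simp
    also have "\<dots> \<le> of_nat N"
    proof -
      have "card (set_pmf \<nu>0) \<le> card (x ` {..<N})" using s0 by (intro card_mono) auto
      also have "\<dots> \<le> N" using card_image_le[of "{..<N}" x] by simp
      finally show ?thesis by simp
    qed
    finally show ?thesis .
  qed
  obtain \<delta> where \<delta>: "\<delta> > 0" "\<forall>\<nu>\<in>(Mc m :: (real^'n) pmf set). \<forall>A. finite A \<and> card A < N \<longrightarrow>
            measure_pmf.prob \<nu> A \<le> 1 - \<delta>"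
    using delta_lemma[OF minN N1] by blast
  define d where "d = min \<delta> (1/2)"
  have d: "0 < d" "d \<le> 1/2" using \<delta> by (auto simp: d_def)
  define t where "t = (d / (2 * N))^2"
  have t0: "t > 0" using d N1 by (simp add: t_def)
  have lower: "ennreal (real N * t powr \<theta>) \<le> Theta TYPE('n) m \<theta>" if th: "0 < \<theta>" "\<theta> \<le> 1/2" for \<theta>
    unfolding Theta_def
  proof (rule INF_greatest)
    fix \<nu> :: "(real^'n) pmf" assume \<nu>: "\<nu> \<in> Mc m"
    have dl: "\<forall>A. finite A \<and> card A < N \<longrightarrow> measure_pmf.prob \<nu> A \<le> 1 - d"
      using \<delta>(2) \<nu> by (force simp: d_def)
    obtain F where F: "finite F" "F \<subseteq> set_pmf \<nu>" "measure_pmf.prob \<nu> F > 1 - d/2"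
      using finite_big_subset[of "d/2" \<nu>] d by auto
    have "real N * t powr \<theta> \<le> (\<Sum>y\<in>F. pmf \<nu> y powr \<theta>)"
      by (rule lower_real[OF dl d N1 t_def th F])
    hence "ennreal (real N * t powr \<theta>) \<le> ennreal (\<Sum>y\<in>F. pmf \<nu> y powr \<theta>)"
      by (rule ennreal_leI)
    also have "\<dots> = (\<Sum>y\<in>F. ennreal (pmf \<nu> y powr \<theta>))"
      by (rule sum_ennreal[symmetric]) simp
    also have "\<dots> \<le> (\<Sum>\<^sub>\<infinity>y\<in>set_pmf \<nu>. ennreal (pmf \<nu> y powr \<theta>))"
      by (rule infsum_ennreal_ge_finite[OF F(1,2)])
    finally show "ennreal (real N * t powr \<theta>) \<le> (\<Sum>\<^sub>\<infinity>y\<in>set_pmf \<nu>. ennreal (pmf \<nu> y powr \<theta>))" .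
  qed
  have lim: "((\<lambda>\<theta>. ennreal (real N * t powr \<theta>)) \<longlongrightarrow> of_nat N) (at_right 0)"
  proof -
    have "((\<lambda>\<theta>::real. t powr \<theta>) \<longlongrightarrow> t powr 0) (at_right 0)"
      using t0 by (intro tendsto_powr tendsto_const tendsto_ident_at) auto
    hence "((\<lambda>\<theta>. real N * t powr \<theta>) \<longlongrightarrow> real N) (at_right 0)"
      using t0 tendsto_mult[OF tendsto_const[of "real N"]] by fastforce
    hence "((\<lambda>\<theta>. ennreal (real N * t powr \<theta>)) \<longlongrightarrow> ennreal (real N)) (at_right 0)"
      by (rule tendsto_ennrealI)
    thus ?thesis by (simp add: ennreal_of_nat_eq_real_of_nat)
  qed
  have ev: "\<forall>\<^sub>F \<theta> in at_right (0::real). 0 < \<theta> \<and> \<theta> \<le> 1/2"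
    using eventually_at_right_real[of 0 "1/2"] by (auto elim!: eventually_mono)
  show ?thesis unfolding N_def[symmetric]
  proof (rule tendsto_sandwich[OF _ _ lim tendsto_const])
    show "\<forall>\<^sub>F \<theta> in at_right 0. ennreal (real N * t powr \<theta>) \<le> Theta TYPE('n) m \<theta>"
      using ev by (auto elim!: eventually_mono intro: lower)
    show "\<forall>\<^sub>F \<theta> in at_right 0. Theta TYPE('n) m \<theta> \<le> of_nat N"
      using ev by (auto elim!: eventually_mono intro: upper)
  qed
qed


lemma sm_space: "space (sphere_measure :: (real^'n::finite) measure) = sphere 0 1"
  unfolding sphere_measure_def by (simp add: space_restrict_space space_scale_measure)

lemma sm_sets: "sets (sphere_measure :: (real^'n::finite) measure) = sets (restrict_space borel (sphere 0 1))"
  unfolding sphere_measure_def by (simp add: sets_scale_measure)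

lemma sm_emeasure:
  "emeasure (sphere_measure :: (real^'n::finite) measure) (sphere 0 1)
     = of_nat CARD('n) * emeasure lborel (ball (0::real^'n) 1)"
proof -
  let ?L = "restrict_space lborel (ball (0::real^'n) 1 - {0})"
  let ?B = "restrict_space borel (sphere (0::real^'n) 1)"
  have meas: "(\<lambda>x::real^'n. x /\<^sub>R norm x) \<in> measurable ?L ?B"
  proof (rule measurable_restrict_space2)
    show "(\<lambda>x::real^'n. x /\<^sub>R norm x) \<in> ?L \<rightarrow>\<^sub>M borel"
      by (rule measurable_restrict_space1) measurable
    show "(\<lambda>x::real^'n. x /\<^sub>R norm x) \<in> space ?L \<rightarrow> sphere 0 1"
      by (auto simp: space_restrict_space)
  qed
  have "emeasure (distr ?L ?B (\<lambda>x. x /\<^sub>R norm x)) (sphere 0 1)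
        = emeasure ?L ((\<lambda>x. x /\<^sub>R norm x) -` sphere 0 1 \<inter> space ?L)"
    by (rule emeasure_distr[OF meas]) (simp add: sets_restrict_space_iff)
  also have "(\<lambda>x::real^'n. x /\<^sub>R norm x) -` sphere 0 1 \<inter> space ?L = ball 0 1 - {0}"
    by (auto simp: space_restrict_space)
  also have "emeasure ?L (ball 0 1 - {0}) = emeasure lborel (ball (0::real^'n) 1 - {0})"
    by (rule emeasure_restrict_space) auto
  also have "\<dots> = emeasure lborel (ball (0::real^'n) 1)"
    by (rule emeasure_Diff_null_set) (auto intro: finite_imp_null_set_lborel)
  finally show ?thesis unfolding sphere_measure_def by (simp add: emeasure_scale_measure)
qed

definition sm_vol :: "'n::finite itself \<Rightarrow> real" where
  "sm_vol _ = measure (sphere_measure :: (real^'n) measure) (sphere 0 1)"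

lemma sm_vol_emeasure: "emeasure (sphere_measure :: (real^'n::finite) measure) (sphere 0 1) = ennreal (sm_vol TYPE('n))"
  and sm_vol_pos: "sm_vol TYPE('n) > 0"
proof -
  have b: "emeasure lborel (ball (0::real^'n) 1) = ennreal (unit_ball_vol (real DIM(real^'n)))"
    by (subst emeasure_ball) auto
  have pos: "unit_ball_vol (real DIM(real^'n)) > 0" by (rule unit_ball_vol_pos) simp
  have e: "emeasure (sphere_measure :: (real^'n) measure) (sphere 0 1)
      = ennreal (real CARD('n) * unit_ball_vol (real DIM(real^'n)))"
    unfolding sm_emeasure b using pos by (simp add: ennreal_mult ennreal_of_nat_eq_real_of_nat)
  thus "emeasure (sphere_measure :: (real^'n::finite) measure) (sphere 0 1) = ennreal (sm_vol TYPE('n))"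
    unfolding sm_vol_def measure_def using pos by simp
  show "sm_vol TYPE('n) > 0"
    unfolding sm_vol_def measure_def e using pos by simp
qed

lemma sm_finite: "finite_measure (sphere_measure :: (real^'n::finite) measure)"
  by (rule finite_measureI) (simp add: sm_space sm_vol_emeasure)

lemma sm_integrable:
  assumes "continuous_on UNIV (h :: real^'n::finite \<Rightarrow> real)"
  shows "integrable sphere_measure h"
proof -
  interpret finite_measure "sphere_measure :: (real^'n) measure" by (rule sm_finite)
  have "compact (h ` sphere 0 1)"
    by (intro compact_continuous_image continuous_on_subset[OF assms]) auto
  then obtain B where B: "\<forall>y\<in>h ` sphere 0 1. norm y \<le> B"
    using compact_imp_bounded bounded_iff by metis
  show ?thesis
  proof (rule integrable_const_bound[where B=B])
    show "AE x in sphere_measure. norm (h x) \<le> B" using B by (intro AE_I2) (auto simp: sm_space)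
    show "h \<in> borel_measurable sphere_measure"
      unfolding measurable_cong_sets[OF sm_sets refl]
      by (rule measurable_restrict_space1) (rule borel_measurable_continuous_onI[OF assms])
  qed
qed

definition tv :: "('n::finite \<Rightarrow> nat) \<Rightarrow> real" where
  "tv \<alpha> = integral\<^sup>L (sphere_measure :: (real^'n) measure) (mnm \<alpha>) / sm_vol TYPE('n)"

lemma sm_int_sum:
  fixes a :: "('n::finite \<Rightarrow> nat) \<Rightarrow> real"
  assumes "finite M"
  shows "integral\<^sup>L (sphere_measure :: (real^'n) measure) (\<lambda>y. \<Sum>\<alpha>\<in>M. a \<alpha> * mnm \<alpha> y)
         = sm_vol TYPE('n) * (\<Sum>\<alpha>\<in>M. a \<alpha> * tv \<alpha>)"
proof -
  have "integral\<^sup>L (sphere_measure :: (real^'n) measure) (\<lambda>y. \<Sum>\<alpha>\<in>M. a \<alpha> * mnm \<alpha> y)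
      = (\<Sum>\<alpha>\<in>M. integral\<^sup>L (sphere_measure :: (real^'n) measure) (\<lambda>y. a \<alpha> * mnm \<alpha> y))"
    by (rule Bochner_Integration.integral_sum[where f="\<lambda>\<alpha> y. a \<alpha> * mnm \<alpha> y"]) (auto intro!: sm_integrable continuous_intros continuous_on_mnm)
  also have "\<dots> = (\<Sum>\<alpha>\<in>M. a \<alpha> * integral\<^sup>L (sphere_measure :: (real^'n) measure) (mnm \<alpha>))"
    by simp
  also have "\<dots> = sm_vol TYPE('n) * (\<Sum>\<alpha>\<in>M. a \<alpha> * tv \<alpha>)"
    using sm_vol_pos[where 'n='n] by (simp add: tv_def sum_distrib_left field_simps)
  finally show ?thesis .
qed

lemma tv_sep:
  fixes a :: "('n::finite \<Rightarrow> nat) \<Rightarrow> real"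
  assumes "finite M" and le: "\<forall>y\<in>sphere (0::real^'n) 1. (\<Sum>\<alpha>\<in>M. a \<alpha> * mnm \<alpha> y) \<le> K"
  shows "(\<Sum>\<alpha>\<in>M. a \<alpha> * tv \<alpha>) \<le> K"
proof -
  interpret finite_measure "sphere_measure :: (real^'n) measure" by (rule sm_finite)
  have "sm_vol TYPE('n) * (\<Sum>\<alpha>\<in>M. a \<alpha> * tv \<alpha>)
      = integral\<^sup>L (sphere_measure :: (real^'n) measure) (\<lambda>y. \<Sum>\<alpha>\<in>M. a \<alpha> * mnm \<alpha> y)"
    by (rule sm_int_sum[OF assms(1), symmetric])
  also have "\<dots> \<le> integral\<^sup>L (sphere_measure :: (real^'n) measure) (\<lambda>y. K)"
    by (rule integral_mono) (use le in \<open>auto simp: sm_space intro!: sm_integrable continuous_intros continuous_on_mnm\<close>)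
  also have "\<dots> = sm_vol TYPE('n) * K"
    by (simp add: sm_space sm_vol_def)
  finally show ?thesis using sm_vol_pos[where 'n='n] by simp
qed

lemma tv_cub:
  fixes x :: "nat \<Rightarrow> real^'n::finite"
  assumes mom: "\<forall>\<alpha>\<in>multi_idx m. (\<Sum>i<N. w i * mnm \<alpha> (x i)) = tv \<alpha>"
    and xw: "\<forall>i<N. x i \<in> sphere 0 1 \<and> w i \<ge> 0"
  shows "cub TYPE('n) m N"
  unfolding cub_def
proof (intro exI conjI ballI)
  show "\<forall>i<N. x i \<in> sphere 0 1 \<and> w i \<ge> 0" by fact
  have m0: "mnm (\<lambda>_. 0) = (\<lambda>_::real^'n. 1::real)" by (simp add: fun_eq_iff)
  have "tv (\<lambda>_::'n. 0::nat) = (1::real)"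
    using sm_vol_pos[where 'n='n] by (simp add: tv_def sm_space sm_vol_def m0)
  moreover have "(\<Sum>i<N. w i * mnm (\<lambda>_::'n. 0) (x i)) = tv (\<lambda>_::'n. 0::nat)"
    using mom zero_in_multi_idx[of m] by blast
  ultimately show "(\<Sum>i<N. w i) = 1" by simp
next
  fix p :: "real^'n \<Rightarrow> real" assume p: "p \<in> polys0 m"
  then obtain c where c: "p = (\<lambda>x. \<Sum>\<alpha>\<in>multi_idx m. c \<alpha> * mnm \<alpha> x)" by (auto simp: polys0_def polys_eq)
  have "0 = integral\<^sup>L (sphere_measure :: (real^'n) measure) p" using p by (simp add: polys0_def)
  also have "\<dots> = sm_vol TYPE('n) * (\<Sum>\<alpha>\<in>multi_idx m. c \<alpha> * tv \<alpha>)"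
    unfolding c by (rule sm_int_sum[OF finite_multi_idx])
  finally have z: "(\<Sum>\<alpha>\<in>multi_idx m. c \<alpha> * tv \<alpha>) = 0" using sm_vol_pos[where 'n='n] by simp
  have "(\<Sum>i<N. w i * p (x i)) = (\<Sum>\<alpha>\<in>multi_idx m. c \<alpha> * (\<Sum>i<N. w i * mnm \<alpha> (x i)))"
    unfolding c by (simp add: sum_distrib_left sum_distrib_right sum.swap[of _ "{..<N}"] mult_ac)
  also have "\<dots> = (\<Sum>\<alpha>\<in>multi_idx m. c \<alpha> * tv \<alpha>)" using mom by simp
  finally show "(\<Sum>i<N. w i * p (x i)) = 0" using z by simp
qed


lemma fun_vs: "vector_space (\<lambda>(r::real) (f::'b \<Rightarrow> real). (\<lambda>i. r * f i))"
  by unfold_locales (auto simp: algebra_simps fun_eq_iff)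

lemma fun_sum_apply: "(sum f A) x = sum (\<lambda>a. f a x) (A::'c set)" for f :: "'c \<Rightarrow> 'b \<Rightarrow> real"
  by (induction A rule: infinite_finite_induct) (auto simp: func_plus func_zero)

lemma dep_exists:
  fixes v :: "'i \<Rightarrow> 'b \<Rightarrow> real"
  assumes M: "finite M" and I: "finite I" and supp: "\<And>i \<beta>. i \<in> I \<Longrightarrow> \<beta> \<notin> M \<Longrightarrow> v i \<beta> = 0"
    and inj: "inj_on v I" and card: "card I > card M"
  shows "\<exists>w. (\<forall>\<beta>. (\<Sum>i\<in>I. w i * v i \<beta>) = 0) \<and> (\<exists>i\<in>I. w i \<noteq> 0)"
proof -
  interpret fv: vector_space "\<lambda>(r::real) (f::'b \<Rightarrow> real). (\<lambda>i. r * f i)" by (rule fun_vs)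
  define e where "e \<alpha> = (\<lambda>\<beta>::'b. if \<beta> = \<alpha> then 1 else (0::real))" for \<alpha>
  have span: "v i \<in> fv.span (e ` M)" if i: "i \<in> I" for i
  proof -
    have "v i = (\<Sum>\<alpha>\<in>M. (\<lambda>\<beta>. v i \<alpha> * e \<alpha> \<beta>))"
    proof
      fix \<beta>
      show "v i \<beta> = (\<Sum>\<alpha>\<in>M. (\<lambda>\<beta>. v i \<alpha> * e \<alpha> \<beta>)) \<beta>"
        using supp[OF i, of \<beta>] M by (cases "\<beta> \<in> M") (simp_all add: fun_sum_apply e_def if_distrib[of "\<lambda>z. _ * z"] sum.delta' cong: if_cong)
    qed
    also have "\<dots> \<in> fv.span (e ` M)"
      by (intro fv.span_sum fv.span_scale fv.span_base) auto
    finally show ?thesis .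
  qed
  have "fv.dependent (v ` I)"
  proof (rule ccontr)
    assume ind: "\<not> fv.dependent (v ` I)"
    have "card (v ` I) \<le> card (e ` M)"
      using fv.independent_span_bound[OF _ ind] span M by auto
    also have "\<dots> \<le> card M" by (rule card_image_le[OF M])
    finally show False using card card_image[OF inj] by simp
  qed
  then obtain t cf where t: "finite t" "t \<subseteq> v ` I" "(\<Sum>y\<in>t. (\<lambda>\<beta>. cf y * y \<beta>)) = 0" "\<exists>y\<in>t. cf y \<noteq> 0"
    unfolding fv.dependent_explicit by blast
  define w where "w i = (if v i \<in> t then cf (v i) else 0)" for i
  define I' where "I' = {i\<in>I. v i \<in> t}"
  have tI: "t = v ` I'" using t(2) by (auto simp: I'_def)
  have inj': "inj_on v I'" using inj by (rule inj_on_subset) (auto simp: I'_def)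
  show ?thesis
  proof (intro exI conjI allI)
    fix \<beta>
    have "(\<Sum>i\<in>I. w i * v i \<beta>) = (\<Sum>i\<in>I'. cf (v i) * v i \<beta>)"
      unfolding I'_def using I by (intro sum.mono_neutral_cong_right) (auto simp: w_def)
    also have "\<dots> = (\<Sum>y\<in>t. cf y * y \<beta>)"
      unfolding tI by (rule sum.reindex[OF inj', symmetric, unfolded o_def])
    also have "\<dots> = (\<Sum>y\<in>t. (\<lambda>\<beta>. cf y * y \<beta>)) \<beta>" by (simp add: fun_sum_apply)
    also have "\<dots> = 0" using t(3) by simp
    finally show "(\<Sum>i\<in>I. w i * v i \<beta>) = 0" .
  next
    obtain y where "y \<in> t" "cf y \<noteq> 0" using t(4) by blast
    then obtain i where "i \<in> I" "v i = y" using t(2) by blast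
    thus "\<exists>i\<in>I. w i \<noteq> 0" using \<open>y \<in> t\<close> \<open>cf y \<noteq> 0\<close> by (auto simp: w_def)
  qed
qed


lemma carath:
  fixes g :: "'b \<Rightarrow> 'a \<Rightarrow> real" and pts :: "'i \<Rightarrow> 'a"
  assumes M: "finite M" and c: "c \<in> M" "\<And>x. g c x = 1"
  shows "finite I \<Longrightarrow> (\<forall>i\<in>I. u i \<ge> 0) \<Longrightarrow> \<exists>J u'. J \<subseteq> I \<and> card J \<le> card M \<and> (\<forall>i\<in>J. u' i \<ge> 0) \<and>
           (\<forall>\<alpha>\<in>M. (\<Sum>i\<in>J. u' i * g \<alpha> (pts i)) = (\<Sum>i\<in>I. u i * g \<alpha> (pts i)))"
proof (induction "card I" arbitrary: I u rule: less_induct)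
  case less
  note I = less.prems(1) and u = less.prems(2)
  show ?case
  proof (cases "card I \<le> card M")
    case True thus ?thesis using u by blast
  next
    case big: False
    define v where "v i = (\<lambda>\<alpha>. if \<alpha> \<in> M then g \<alpha> (pts i) else 0)" for i
    show ?thesis
    proof (cases "inj_on v I")
      case False
      then obtain a b where ab: "a \<in> I" "b \<in> I" "a \<noteq> b" "v a = v b" unfolding inj_on_def by blast
      have gab: "g \<alpha> (pts b) = g \<alpha> (pts a)" if "\<alpha> \<in> M" for \<alpha>
        using fun_cong[OF ab(4), of \<alpha>] that by (simp add: v_def)
      define I' where "I' = I - {b}"
      define u2 where "u2 = u(a := u a + u b)"
      have cI': "card I' < card I" using ab I unfolding I'_def by (meson card_Diff1_less)
      have u2: "\<forall>i\<in>I'. u2 i \<ge> 0" using u ab by (auto simp: u2_def I'_def)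
      obtain J u' where J: "J \<subseteq> I'" "card J \<le> card M" "\<forall>i\<in>J. u' i \<ge> 0"
        "\<forall>\<alpha>\<in>M. (\<Sum>i\<in>J. u' i * g \<alpha> (pts i)) = (\<Sum>i\<in>I'. u2 i * g \<alpha> (pts i))"
        using less.hyps[OF cI' _ u2] I by (auto simp: I'_def)
      have eq: "(\<Sum>i\<in>I'. u2 i * g \<alpha> (pts i)) = (\<Sum>i\<in>I. u i * g \<alpha> (pts i))" if \<alpha>: "\<alpha> \<in> M" for \<alpha>
      proof -
        have aI': "a \<in> I'" using ab by (simp add: I'_def)
        have "(\<Sum>i\<in>I'. u2 i * g \<alpha> (pts i)) = u2 a * g \<alpha> (pts a) + (\<Sum>i\<in>I' - {a}. u2 i * g \<alpha> (pts i))"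
          by (rule sum.remove[OF _ aI']) (use I in \<open>simp add: I'_def\<close>)
        also have "(\<Sum>i\<in>I' - {a}. u2 i * g \<alpha> (pts i)) = (\<Sum>i\<in>I' - {a}. u i * g \<alpha> (pts i))"
          by (intro sum.cong) (auto simp: u2_def)
        also have "u2 a * g \<alpha> (pts a) = u a * g \<alpha> (pts a) + u b * g \<alpha> (pts b)"
          using gab[OF \<alpha>] by (simp add: u2_def algebra_simps)
        also have "u a * g \<alpha> (pts a) + u b * g \<alpha> (pts b) + (\<Sum>i\<in>I' - {a}. u i * g \<alpha> (pts i))
            = (\<Sum>i\<in>I. u i * g \<alpha> (pts i))"
        proof -
          have "(\<Sum>i\<in>I. u i * g \<alpha> (pts i)) = u b * g \<alpha> (pts b) + (\<Sum>i\<in>I'. u i * g \<alpha> (pts i))"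
            unfolding I'_def by (rule sum.remove[OF I ab(2)])
          also have "(\<Sum>i\<in>I'. u i * g \<alpha> (pts i)) = u a * g \<alpha> (pts a) + (\<Sum>i\<in>I' - {a}. u i * g \<alpha> (pts i))"
            by (rule sum.remove[OF _ aI']) (use I in \<open>simp add: I'_def\<close>)
          finally show ?thesis by simp
        qed
        finally show ?thesis .
      qed
      show ?thesis using J eq by (intro exI[of _ J] exI[of _ u']) (auto simp: I'_def)
    next
      case inj: True
      obtain w where w: "\<forall>\<beta>. (\<Sum>i\<in>I. w i * v i \<beta>) = 0" "\<exists>i\<in>I. w i \<noteq> 0"
        using dep_exists[OF M I _ inj] big by (force simp: v_def)
      have wg: "(\<Sum>i\<in>I. w i * g \<alpha> (pts i)) = 0" if "\<alpha> \<in> M" for \<alpha>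
        using w(1)[rule_format, of \<alpha>] that by (simp add: v_def)
      have sw: "(\<Sum>i\<in>I. w i) = 0" using wg[OF c(1)] c(2) by simp
      have "\<exists>i\<in>I. w i < 0"
      proof (rule ccontr)
        assume "\<not> (\<exists>i\<in>I. w i < 0)"
        hence "\<forall>i\<in>I. w i \<ge> 0" by auto
        hence "\<forall>i\<in>I. w i = 0" using sw sum_nonneg_eq_0_iff[OF I] by blast
        thus False using w(2) by blast
      qed
      define Ng where "Ng = {i\<in>I. w i < 0}"
      have Ng: "finite Ng" "Ng \<noteq> {}" using I \<open>\<exists>i\<in>I. w i < 0\<close> by (auto simp: Ng_def)
      define \<tau> where "\<tau> = Min ((\<lambda>i. u i / (- w i)) ` Ng)"
      have "\<tau> \<in> (\<lambda>i. u i / (- w i)) ` Ng"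
        unfolding \<tau>_def using Ng by (intro Min_in) auto
      then obtain a where a: "a \<in> Ng" "\<tau> = u a / (- w a)" by blast
      have tau_le: "\<tau> \<le> u i / (- w i)" if "i \<in> Ng" for i
        unfolding \<tau>_def using Ng that by (intro Min_le) auto
      have tau0: "\<tau> \<ge> 0" using a u by (auto simp: Ng_def divide_nonneg_neg)
      define u2 where "u2 i = u i + \<tau> * w i" for i
      have u2nn: "u2 i \<ge> 0" if "i \<in> I" for i
      proof (cases "w i < 0")
        case True
        hence "\<tau> \<le> u i / (- w i)" using tau_le that by (auto simp: Ng_def)
        hence "\<tau> * (- w i) \<le> u i / (- w i) * (- w i)" using True by (intro mult_right_mono) auto
        hence "\<tau> * (- w i) \<le> u i" using True by simp
        thus ?thesis by (simp add: u2_def)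
      next
        case False thus ?thesis using u that tau0 by (simp add: u2_def)
      qed
      have u2a: "u2 a = 0" using a by (auto simp: u2_def Ng_def)
      have aI: "a \<in> I" using a by (auto simp: Ng_def)
      define I' where "I' = I - {a}"
      have cI': "card I' < card I" using aI I unfolding I'_def by (meson card_Diff1_less)
      have u2': "\<forall>i\<in>I'. u2 i \<ge> 0" using u2nn by (auto simp: I'_def)
      obtain J u' where J: "J \<subseteq> I'" "card J \<le> card M" "\<forall>i\<in>J. u' i \<ge> 0"
        "\<forall>\<alpha>\<in>M. (\<Sum>i\<in>J. u' i * g \<alpha> (pts i)) = (\<Sum>i\<in>I'. u2 i * g \<alpha> (pts i))"
        using less.hyps[OF cI' _ u2'] I by (auto simp: I'_def)
      have eq: "(\<Sum>i\<in>I'. u2 i * g \<alpha> (pts i)) = (\<Sum>i\<in>I. u i * g \<alpha> (pts i))" if \<alpha>: "\<alpha> \<in> M" for \<alpha>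
      proof -
        have "(\<Sum>i\<in>I. u2 i * g \<alpha> (pts i)) = u2 a * g \<alpha> (pts a) + (\<Sum>i\<in>I'. u2 i * g \<alpha> (pts i))"
          unfolding I'_def by (rule sum.remove[OF I aI])
        hence "(\<Sum>i\<in>I'. u2 i * g \<alpha> (pts i)) = (\<Sum>i\<in>I. u2 i * g \<alpha> (pts i))" using u2a by simp
        also have "\<dots> = (\<Sum>i\<in>I. u i * g \<alpha> (pts i)) + \<tau> * (\<Sum>i\<in>I. w i * g \<alpha> (pts i))"
          by (simp add: u2_def algebra_simps sum.distrib sum_distrib_left)
        also have "\<dots> = (\<Sum>i\<in>I. u i * g \<alpha> (pts i))" using wg[OF \<alpha>] by simp
        finally show ?thesis .
      qed
      show ?thesis using J eq by (intro exI[of _ J] exI[of _ u']) (auto simp: I'_def)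
    qed
  qed
qed


definition dd :: "'n::finite itself \<Rightarrow> nat \<Rightarrow> nat" where
  "dd _ m = card (multi_idx m :: ('n \<Rightarrow> nat) set)"

definition Cfg :: "nat \<Rightarrow> (nat \<Rightarrow> real^'n::finite) \<Rightarrow> (nat \<Rightarrow> real) \<Rightarrow> bool" where
  "Cfg m x u \<longleftrightarrow> (\<forall>i<dd TYPE('n) m. x i \<in> sphere 0 1 \<and> u i \<in> {0..1}) \<and> (\<Sum>i<dd TYPE('n) m. u i) = 1"

definition Qf :: "nat \<Rightarrow> (nat \<Rightarrow> real^'n::finite) \<Rightarrow> (nat \<Rightarrow> real) \<Rightarrow> real" where
  "Qf m x u = (\<Sum>\<alpha>\<in>(multi_idx m :: ('n \<Rightarrow> nat) set). ((\<Sum>i<dd TYPE('n) m. u i * mnm \<alpha> (x i)) - tv \<alpha>)^2)"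

lemma reduce_cfg:
  fixes pts :: "nat \<Rightarrow> real^'n::finite"
  assumes I: "finite I" and pts: "\<forall>i\<in>I. pts i \<in> sphere 0 1" and u: "\<forall>i\<in>I. u i \<ge> 0"
    and s1: "(\<Sum>i\<in>I. u i) = 1"
  shows "\<exists>x' u'. Cfg m x' u' \<and> (\<forall>\<alpha>\<in>(multi_idx m :: ('n \<Rightarrow> nat) set). (\<Sum>i<dd TYPE('n) m. u' i * mnm \<alpha> (x' i)) = (\<Sum>i\<in>I. u i * mnm \<alpha> (pts i)))"
proof -
  have M0: "(\<lambda>_. 0) \<in> (multi_idx m :: ('n \<Rightarrow> nat) set)" by (rule zero_in_multi_idx)
  obtain J u2 where J: "J \<subseteq> I" "card J \<le> dd TYPE('n) m" "\<forall>i\<in>J. u2 i \<ge> 0"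
    "\<forall>\<alpha>\<in>(multi_idx m :: ('n \<Rightarrow> nat) set). (\<Sum>i\<in>J. u2 i * mnm \<alpha> (pts i)) = (\<Sum>i\<in>I. u i * mnm \<alpha> (pts i))"
    using carath[where g=mnm and pts=pts and M="multi_idx m :: ('n \<Rightarrow> nat) set" and c="\<lambda>_. 0" and I=I and u=u,
        OF finite_multi_idx M0 _ I u] by (auto simp: dd_def)
  have finJ: "finite J" using J(1) I finite_subset by blast
  obtain e where e: "bij_betw e {..<card J} J" using bij_betw_from_nat_into_finite[OF finJ] by blast
  obtain s0 :: "real^'n" where s0: "s0 \<in> sphere 0 1"
    using sphere_eq_empty[of "0::real^'n" 1] by fastforce
  define x' where "x' i = (if i < card J then pts (e i) else s0)" for i
  define u' where "u' i = (if i < card J then u2 (e i) else 0)" for i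
  have eJ: "e i \<in> J" if "i < card J" for i using e that by (auto simp: bij_betw_def)
  have mom: "(\<Sum>i<dd TYPE('n) m. u' i * mnm \<alpha> (x' i)) = (\<Sum>i\<in>J. u2 i * mnm \<alpha> (pts i))" for \<alpha>
  proof -
    have "(\<Sum>i<dd TYPE('n) m. u' i * mnm \<alpha> (x' i)) = (\<Sum>i<card J. u' i * mnm \<alpha> (x' i))"
      by (rule sum.mono_neutral_right) (use J(2) in \<open>auto simp: u'_def\<close>)
    also have "\<dots> = (\<Sum>i<card J. u2 (e i) * mnm \<alpha> (pts (e i)))"
      by (rule sum.cong) (auto simp: u'_def x'_def)
    also have "\<dots> = (\<Sum>i\<in>J. u2 i * mnm \<alpha> (pts i))"
      by (rule sum.reindex_bij_betw[OF e])
    finally show ?thesis .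
  qed
  have sum1: "(\<Sum>i<dd TYPE('n) m. u' i) = 1"
  proof -
    have "(\<Sum>i\<in>J. u2 i * mnm (\<lambda>_::'n. 0) (pts i)) = (\<Sum>i\<in>I. u i * mnm (\<lambda>_::'n. 0) (pts i))"
      using J(4) M0 by blast
    thus ?thesis using mom[of "\<lambda>_. 0"] s1 by simp
  qed
  have nn: "u' i \<ge> 0" for i using J(3) eJ by (auto simp: u'_def)
  have "\<forall>i<dd TYPE('n) m. x' i \<in> sphere 0 1 \<and> u' i \<in> {0..1}"
  proof (intro allI impI)
    fix i assume i: "i < dd TYPE('n) m"
    have "x' i \<in> sphere 0 1" using pts J(1) eJ s0 by (auto simp: x'_def)
    moreover have "u' i \<le> 1"
    proof -
      have "u' i \<le> (\<Sum>i<dd TYPE('n) m. u' i)" using i nn by (intro member_le_sum) auto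
      thus ?thesis using sum1 by simp
    qed
    ultimately show "x' i \<in> sphere 0 1 \<and> u' i \<in> {0..1}" using nn by auto
  qed
  hence "Cfg m x' u'" using sum1 by (simp add: Cfg_def)
  thus ?thesis using mom J(4) by (intro exI[of _ x'] exI[of _ u']) auto
qed


lemma dd_pos: "dd TYPE('n::finite) m \<ge> 1"
proof -
  have "card (multi_idx m :: ('n \<Rightarrow> nat) set) > 0"
    using finite_multi_idx zero_in_multi_idx card_gt_0_iff by blast
  thus ?thesis by (simp add: dd_def)
qed

lemma tendsto_Qf:
  assumes "\<And>i. i < dd TYPE('n::finite) m \<Longrightarrow> ((\<lambda>k. x k i) \<longlongrightarrow> (xl i :: real^'n)) F"
    "\<And>i. i < dd TYPE('n) m \<Longrightarrow> ((\<lambda>k. u k i) \<longlongrightarrow> ul i) F"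
  shows "((\<lambda>k. Qf m (x k) (u k)) \<longlongrightarrow> Qf m xl ul) F"
  unfolding Qf_def using assms
  by (intro tendsto_sum tendsto_power tendsto_diff tendsto_mult tendsto_const tendsto_mnm) auto

lemma Qf_nonneg: "Qf m x u \<ge> 0"
  unfolding Qf_def by (intro sum_nonneg) auto

lemma minimizer:
  "\<exists>(xs :: nat \<Rightarrow> real^'n::finite) us. Cfg m xs us \<and> (\<forall>(x :: nat \<Rightarrow> real^'n) u. Cfg m x u \<longrightarrow> Qf m xs us \<le> Qf m x u)"
proof -
  let ?D = "dd TYPE('n) m"
  define QS where "QS = {Qf m x u | (x :: nat \<Rightarrow> real^'n) u. Cfg m x u}"
  obtain s0 :: "real^'n" where s0: "s0 \<in> sphere 0 1"
    using sphere_eq_empty[of "0::real^'n" 1] by fastforce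
  have D1: "?D \<ge> 1" by (rule dd_pos)
  have "Cfg m (\<lambda>_. s0) (\<lambda>_. 1 / real ?D)"
    unfolding Cfg_def using s0 D1 by auto
  hence ne: "QS \<noteq> {}" unfolding QS_def by blast
  have bdd: "bdd_below QS" unfolding QS_def bdd_below_def using Qf_nonneg by blast
  define q where "q = Inf QS"
  have lowq: "q \<le> Qf m x u" if "Cfg m x u" for x :: "nat \<Rightarrow> real^'n" and u
    unfolding q_def using that bdd by (intro cInf_lower) (auto simp: QS_def)
  have "\<forall>k::nat. \<exists>x u. Cfg m (x :: nat \<Rightarrow> real^'n) u \<and> Qf m x u < q + 1 / real (Suc k)"
  proof
    fix k :: nat
    have "Inf QS < q + 1 / real (Suc k)" unfolding q_def by simp
    then obtain z where "z \<in> QS" "z < q + 1 / real (Suc k)" using cInf_lessD[OF ne] by blast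
    thus "\<exists>x u. Cfg m (x :: nat \<Rightarrow> real^'n) u \<and> Qf m x u < q + 1 / real (Suc k)" unfolding QS_def by blast
  qed
  then obtain xk uk where k: "\<And>k. Cfg m (xk k :: nat \<Rightarrow> real^'n) (uk k) \<and> Qf m (xk k) (uk k) < q + 1 / real (Suc k)"
    by metis
  have cK: "compact (sphere (0::real^'n) 1 \<times> {0::real..1})"
    by (intro compact_Times) auto
  have inK: "(xk k i, uk k i) \<in> sphere 0 1 \<times> {0..1}" if "i < ?D" for k i
    using k[of k] that by (auto simp: Cfg_def)
  obtain l r where r: "strict_mono r" and
    l: "\<forall>i<?D. l i \<in> sphere 0 1 \<times> {0..1} \<and> ((\<lambda>k. (xk (r k) i, uk (r k) i)) \<longlonglongrightarrow> l i)"
    using bw_fin[OF cK, of ?D "\<lambda>k i. (xk k i, uk k i)"] inK by blast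
  define xs where "xs i = fst (l i)" for i
  define us where "us i = snd (l i)" for i
  have limx: "(\<lambda>k. xk (r k) i) \<longlonglongrightarrow> xs i" and limu: "(\<lambda>k. uk (r k) i) \<longlonglongrightarrow> us i" if "i < ?D" for i
    using l that tendsto_fst tendsto_snd unfolding xs_def us_def by fastforce+
  have sum1: "(\<Sum>i<?D. us i) = 1"
  proof -
    have "(\<lambda>k. \<Sum>i<?D. uk (r k) i) \<longlonglongrightarrow> (\<Sum>i<?D. us i)" by (intro tendsto_sum limu) auto
    moreover have "(\<lambda>k. \<Sum>i<?D. uk (r k) i) = (\<lambda>k. 1)" using k by (auto simp: Cfg_def)
    ultimately show ?thesis using LIMSEQ_unique tendsto_const by metis
  qed
  have cfg: "Cfg m xs us" unfolding Cfg_def using sum1 l by (auto simp: xs_def us_def mem_Times_iff)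
  have "Qf m xs us \<le> q"
  proof -
    have t1: "(\<lambda>k. Qf m (xk (r k)) (uk (r k))) \<longlonglongrightarrow> Qf m xs us"
      by (rule tendsto_Qf) (auto intro: limx limu)
    have inv0: "(\<lambda>k. 1 / real (Suc (r k))) \<longlonglongrightarrow> 0"
    proof -
      have "(\<lambda>k. 1 / real (Suc k)) \<longlonglongrightarrow> 0"
        using LIMSEQ_inverse_real_of_nat by (simp add: inverse_eq_divide)
      from LIMSEQ_subseq_LIMSEQ[OF this r] show ?thesis by (simp add: o_def)
    qed
    have t2: "(\<lambda>k. q + 1 / real (Suc (r k))) \<longlonglongrightarrow> q"
      using tendsto_add[OF tendsto_const[of q] inv0] by simp
    show ?thesis
      by (rule LIMSEQ_le[OF t1 t2]) (use k in \<open>auto intro!: exI[of _ 0] less_imp_le\<close>)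
  qed
  thus ?thesis using cfg lowq by (intro exI[of _ xs] exI[of _ us]) (meson order.trans)
qed


lemma cub_exists: "\<exists>N. cub TYPE('n::finite) m N"
proof -
  let ?D = "dd TYPE('n) m"
  let ?M = "multi_idx m :: ('n \<Rightarrow> nat) set"
  obtain xs :: "nat \<Rightarrow> real^'n" and us where cfg: "Cfg m xs us"
    and opt: "\<And>x :: nat \<Rightarrow> real^'n. \<And>u. Cfg m x u \<Longrightarrow> Qf m xs us \<le> Qf m x u"
    using minimizer[where 'n='n and m=m] by blast
  have xs: "\<forall>i<?D. xs i \<in> sphere 0 1 \<and> us i \<ge> 0" and s1: "(\<Sum>i<?D. us i) = 1"
    using cfg by (auto simp: Cfg_def)
  define ms where "ms \<alpha> = (\<Sum>i<?D. us i * mnm \<alpha> (xs i))" for \<alpha>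
  define a where "a \<alpha> = tv \<alpha> - ms \<alpha>" for \<alpha>
  have Qs: "Qf m xs us = (\<Sum>\<alpha>\<in>?M. (a \<alpha>)^2)"
    unfolding Qf_def a_def ms_def by (intro sum.cong refl) (simp add: power2_commute)
  have key: "(\<Sum>\<alpha>\<in>?M. a \<alpha> * mnm \<alpha> y) \<le> (\<Sum>\<alpha>\<in>?M. a \<alpha> * ms \<alpha>)" if y: "y \<in> sphere 0 1" for y
  proof -
    define b where "b \<alpha> = mnm \<alpha> y - ms \<alpha>" for \<alpha>
    define P where "P = (\<Sum>\<alpha>\<in>?M. a \<alpha> * b \<alpha>)"
    define R where "R = (\<Sum>\<alpha>\<in>?M. (b \<alpha>)^2)"
    have R0: "R \<ge> 0" unfolding R_def by (intro sum_nonneg) auto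
    have ineq: "2 * lm * P \<le> lm^2 * R" if lam: "0 < lm" "lm \<le> 1" for lm
    proof -
      define pts where "pts = xs(?D := y)"
      define uu where "uu i = (if i = ?D then lm else (1 - lm) * us i)" for i
      have pI: "\<forall>i\<in>{..<Suc ?D}. pts i \<in> sphere 0 1" using xs y by (auto simp: pts_def less_Suc_eq)
      have uI: "\<forall>i\<in>{..<Suc ?D}. uu i \<ge> 0" using xs lam by (auto simp: uu_def less_Suc_eq)
      have sI: "(\<Sum>i\<in>{..<Suc ?D}. uu i) = 1"
      proof -
        have "(\<Sum>i\<in>{..<Suc ?D}. uu i) = (\<Sum>i<?D. (1 - lm) * us i) + lm"
          by (simp add: uu_def)
        also have "\<dots> = 1" using s1 by (simp add: sum_distrib_left[symmetric])
        finally show ?thesis .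
      qed
      have momI: "(\<Sum>i\<in>{..<Suc ?D}. uu i * mnm \<alpha> (pts i)) = (1 - lm) * ms \<alpha> + lm * mnm \<alpha> y" for \<alpha>
      proof -
        have "(\<Sum>i\<in>{..<Suc ?D}. uu i * mnm \<alpha> (pts i)) = (\<Sum>i<?D. (1 - lm) * us i * mnm \<alpha> (xs i)) + lm * mnm \<alpha> y"
          by (simp add: uu_def pts_def)
        also have "\<dots> = (1 - lm) * ms \<alpha> + lm * mnm \<alpha> y"
          by (simp add: ms_def sum_distrib_left mult.assoc)
        finally show ?thesis .
      qed
      obtain x' :: "nat \<Rightarrow> real^'n" and u' where c': "Cfg m x' u'"
        and m': "\<forall>\<alpha>\<in>?M. (\<Sum>i<?D. u' i * mnm \<alpha> (x' i)) = (\<Sum>i\<in>{..<Suc ?D}. uu i * mnm \<alpha> (pts i))"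
        using reduce_cfg[OF _ pI uI sI] by blast
      have "Qf m x' u' = (\<Sum>\<alpha>\<in>?M. (lm * b \<alpha> - a \<alpha>)^2)"
        unfolding Qf_def
      proof (intro sum.cong refl)
        fix \<alpha> assume "\<alpha> \<in> ?M"
        hence "(\<Sum>i<?D. u' i * mnm \<alpha> (x' i)) = (1 - lm) * ms \<alpha> + lm * mnm \<alpha> y"
          using m' momI by metis
        hence "(\<Sum>i<?D. u' i * mnm \<alpha> (x' i)) - tv \<alpha> = lm * b \<alpha> - a \<alpha>"
          by (simp add: a_def b_def algebra_simps)
        thus "((\<Sum>i<?D. u' i * mnm \<alpha> (x' i)) - tv \<alpha>)^2 = (lm * b \<alpha> - a \<alpha>)^2"
          by simp
      qed
      also have "\<dots> = lm^2 * R - 2 * lm * P + (\<Sum>\<alpha>\<in>?M. (a \<alpha>)^2)"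
        by (simp add: R_def P_def power2_diff sum.distrib sum_subtractf sum_distrib_left power_mult_distrib algebra_simps)
      finally have "Qf m x' u' = lm^2 * R - 2 * lm * P + (\<Sum>\<alpha>\<in>?M. (a \<alpha>)^2)" .
      moreover have "Qf m xs us \<le> Qf m x' u'" by (rule opt[OF c'])
      ultimately show ?thesis using Qs by linarith
    qed
    have "P \<le> 0"
    proof (rule ccontr)
      assume "\<not> P \<le> 0" hence P0: "P > 0" by simp
      define l where "l = min 1 (P / (R + 1))"
      have l0: "0 < l" "l \<le> 1" using P0 R0 by (auto simp: l_def)
      have "2 * l * P \<le> l^2 * R" by (rule ineq[OF l0])
      hence "2 * P \<le> l * R" using l0 by (simp add: power2_eq_square mult.assoc)
      also have "l * R \<le> P / (R + 1) * R" using R0 by (intro mult_right_mono) (auto simp: l_def)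
      also have "\<dots> < P" using P0 R0 by (simp add: field_simps)
      finally show False using P0 by simp
    qed
    thus ?thesis unfolding P_def b_def by (simp add: right_diff_distrib sum_subtractf)
  qed
  have "(\<Sum>\<alpha>\<in>?M. a \<alpha> * tv \<alpha>) \<le> (\<Sum>\<alpha>\<in>?M. a \<alpha> * ms \<alpha>)"
    by (rule tv_sep[OF finite_multi_idx]) (use key in blast)
  hence "(\<Sum>\<alpha>\<in>?M. (a \<alpha>)^2) \<le> 0"
    by (simp add: a_def power2_eq_square right_diff_distrib sum_subtractf)
  hence "\<forall>\<alpha>\<in>?M. (a \<alpha>)^2 = 0"
    using sum_nonneg_eq_0_iff[where A="?M" and f="\<lambda>\<alpha>. (a \<alpha>)^2", OF finite_multi_idx]
    by (metis (no_types, lifting) antisym sum_nonneg zero_le_power2)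
  hence "\<forall>\<alpha>\<in>?M. (\<Sum>i<?D. us i * mnm \<alpha> (xs i)) = tv \<alpha>" by (simp add: a_def ms_def)
  hence "cub TYPE('n) m ?D" by (rule tv_cub) (use xs in auto)
  thus ?thesis by blast
qed

theorem mainTheorem7:
  assumes "CARD('n::finite) \<ge> 2"
  shows "((\<lambda>\<theta>. Theta TYPE('n) m \<theta>) \<longlongrightarrow> of_nat (Nm TYPE('n) m)) (at_right 0)"
  by (rule main_cond[OF cub_exists])


end
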